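(* Let $\chi,a,b,\lambda,\mu$ be positive constants with $b>2\chi\mu$. Let $u_0$ be a bounded, uniformly continuous function on $\mathbb{R}$ with $u_0>0$ on $\mathbb{R}$, $\liminf_{x\to-\infty}u_0(x)>0$, $u_0(x)\to0$ as $x\to+\infty$, and such that for some $\xi_0$, $u_0\in C^2([\xi_0,+\infty))$, $u_0'\le0$ on $[\xi_0,+\infty)$ and $u_0''(x)/u_0(x)\to0$ as $x\to+\infty$. Let $(u,v)$ be the nonnegative classical solution of \[ u_t=u_{xx}-\chi(uv_x)_x+u(a-bu),\quad 0=v_{xx}-\lambda v+\mu u,\quad x\in\mathbb{R},\ t>0,\qquad u(x,0)=u_0(x), \] and let $E_\omega(t)=\{x\in\mathbb{R}:u(x,t)=\omega\}$. For any $\epsilon>0$ and $\gamma_1>0$, if $\zeta(t)$ satisfies $u_0(\zeta(t))=\gamma_1e^{-(a+\epsilon)t}$ for all sufficiently large $t$, then for any $\omega\in(0,a/b)$ there is $T_1\ge0$ such that $E_\omega(t)\subseteq(-\infty,\zeta(t)]$ for all $t\ge T_1$.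
   Context: The solution is the unique nonnegative classical solution with $u\in C([0,\infty),C^b_{\rm unif}(\mathbb{R}))\cap C^1((0,\infty),C^b_{\rm unif}(\mathbb{R}))$ (global and bounded in time since $b>\chi\mu$), where $C^b_{\rm unif}(\mathbb{R})$ is the space of bounded uniformly continuous functions with the sup norm. *)

theory Defs
  imports "HOL-Analysis.Analysis"
begin

text \<open>Nonnegative classical solution (u,v) of
  u_t = u_xx - chi (u v_x)_x + u (a - b u),  0 = v_xx - lam v + mu u,  x in R, t > 0,
  u(x,0) = u0(x), with u in C([0,inf), C^b_unif(R)) and C^1((0,inf), C^b_unif(R)).
  Functions are written u x t.  The space of bounded continuous functions with
  the sup norm is the library type bcontfun; uniform continuity is imposed
  separately.  v(.,t) is required to be bounded (the elliptic equation is read as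
  v = mu (lam - Delta)^(-1) u).\<close>

definition classical_solution ::
  "real \<Rightarrow> real \<Rightarrow> real \<Rightarrow> real \<Rightarrow> real \<Rightarrow> (real \<Rightarrow> real)
   \<Rightarrow> (real \<Rightarrow> real \<Rightarrow> real) \<Rightarrow> (real \<Rightarrow> real \<Rightarrow> real) \<Rightarrow> bool" where
  "classical_solution chi a b lam mu u0 u v \<longleftrightarrow>
     (\<exists>U U' :: real \<Rightarrow> (real \<Rightarrow>\<^sub>C real).
        (\<forall>t\<ge>0. \<forall>x. u x t = apply_bcontfun (U t) x)
      \<and> (\<forall>t\<ge>0. uniformly_continuous_on UNIV (apply_bcontfun (U t)))
      \<and> continuous_on {0..} U
      \<and> (\<forall>t>0. (U has_vector_derivative U' t) (at t))
      \<and> (\<forall>t>0. uniformly_continuous_on UNIV (apply_bcontfun (U' t)))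
      \<and> continuous_on {0<..} U')
   \<and> (\<forall>x. u x 0 = u0 x)
   \<and> (\<forall>x. \<forall>t\<ge>0. u x t \<ge> 0)
   \<and> (\<forall>t>0. \<forall>x. v x t \<ge> 0)
   \<and> (\<forall>t>0. bounded (range (\<lambda>x. v x t)))
   \<and> (\<forall>t>0. \<forall>x.
        (\<lambda>y. u y t) differentiable (at x)
      \<and> deriv (\<lambda>y. u y t) differentiable (at x)
      \<and> (\<lambda>y. v y t) differentiable (at x)
      \<and> deriv (\<lambda>y. v y t) differentiable (at x)
      \<and> (\<lambda>y. u y t * deriv (\<lambda>z. v z t) y) differentiable (at x)
      \<and> ((\<lambda>s. u x s) has_real_derivative
            (deriv (deriv (\<lambda>y. u y t)) x
             - chi * deriv (\<lambda>y. u y t * deriv (\<lambda>z. v z t) y) x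
             + u x t * (a - b * u x t))) (at t)
      \<and> 0 = deriv (deriv (\<lambda>y. v y t)) x - lam * v x t + mu * u x t)"

end

theory Submission
  imports Defs
begin

lemma second_deriv_max:
  fixes f f' :: "real \<Rightarrow> real"
  assumes d: "d > 0"
    and der: "\<And>y. \<bar>y - x\<bar> < d \<Longrightarrow> (f has_real_derivative f' y) (at y)"
    and der2: "(f' has_real_derivative f2) (at x)"
    and mx: "\<And>y. \<bar>y - x\<bar> < d \<Longrightarrow> f y \<le> f x"
  shows "f' x = 0 \<and> f2 \<le> 0"
proof -
  have f'0: "f' x = 0"
    using d mx by (intro DERIV_local_max[OF der[of x] d]) (auto simp: abs_minus_commute)
  moreover have "f2 \<le> 0"
  proof (rule ccontr)
    assume "\<not> f2 \<le> 0"
    then have "f2 > 0" by simp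
    from DERIV_pos_inc_right[OF der2 this] obtain d' where d': "d' > 0"
      "\<And>h. h > 0 \<Longrightarrow> h < d' \<Longrightarrow> f' x < f' (x + h)" by blast
    define h where "h = min d d' / 2"
    have h: "h > 0" "h < d" "h < d'" using d d' by (auto simp: h_def)
    have "\<exists>z. x < z \<and> z < x + h \<and> f (x + h) - f x = (x + h - x) * f' z"
      by (rule MVT2) (use h in \<open>auto intro!: der\<close>)
    then obtain z where z: "x < z" "z < x + h" "f (x + h) - f x = h * f' z" by auto
    have "f' x < f' (x + (z - x))" using z h by (intro d') auto
    then have "f' z > 0" using f'0 by simp
    then have "f (x + h) > f x" using z h by (simp add: algebra_simps)
    moreover have "f (x + h) \<le> f x" using h by (intro mx) auto
    ultimately show False by simp
  qed
  ultimately show ?thesis by simp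
qed

lemma deriv_left_max:
  fixes f :: "real \<Rightarrow> real"
  assumes "(f has_real_derivative D) (at t)" "d > 0"
    and "\<And>s. t - d < s \<Longrightarrow> s < t \<Longrightarrow> f s \<le> f t"
  shows "D \<ge> 0"
proof (rule ccontr)
  assume "\<not> D \<ge> 0"
  then have "D < 0" by simp
  from DERIV_neg_dec_left[OF assms(1) this] obtain e where e: "e > 0"
    "\<And>h. h > 0 \<Longrightarrow> h < e \<Longrightarrow> f t < f (t - h)" by blast
  define h where "h = min d e / 2"
  have h: "h > 0" "h < d" "h < e" using assms(2) e by (auto simp: h_def)
  have "f t < f (t - h)" using h e by auto
  moreover have "f (t - h) \<le> f t" using h by (intro assms(3)) auto
  ultimately show False by simp
qed

lemma max_exists:
  fixes z :: "real \<Rightarrow> real \<Rightarrow> real"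
  assumes S: "closed S" and cont: "continuous_on (S \<times> {0..T}) (\<lambda>p. z (fst p) (snd p))"
    and neg: "\<And>x t. x \<in> S \<Longrightarrow> t \<in> {0..T} \<Longrightarrow> \<bar>x\<bar> \<ge> R \<Longrightarrow> z x t < 0"
    and x0: "x0 \<in> S" "t0 \<in> {0..T}" "z x0 t0 > 0"
  shows "\<exists>xm\<in>S. \<exists>tm\<in>{0..T}. \<forall>x\<in>S. \<forall>t\<in>{0..T}. z x t \<le> z xm tm"
proof -
  define K where "K = (S \<inter> {-R..R}) \<times> {0..T}"
  have cK: "compact K" unfolding K_def
    by (intro compact_Times closed_Int_compact S) auto
  have ne: "K \<noteq> {}"
  proof -
    have "\<bar>x0\<bar> < R" using neg[of x0 t0] x0 by force
    then have "(x0, t0) \<in> K" using x0 by (auto simp: K_def)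
    then show ?thesis by blast
  qed
  have cc: "continuous_on K (\<lambda>p. z (fst p) (snd p))"
    by (rule continuous_on_subset[OF cont]) (auto simp: K_def)
  have "\<exists>pm\<in>K. \<forall>p\<in>K. z (fst p) (snd p) \<le> z (fst pm) (snd pm)"
    by (rule continuous_attains_sup[OF cK ne cc])
  then obtain pm where pm: "pm \<in> K" "\<And>p. p \<in> K \<Longrightarrow> z (fst p) (snd p) \<le> z (fst pm) (snd pm)"
    by blast
  have x0K: "(x0, t0) \<in> K"
  proof -
    have "\<bar>x0\<bar> < R" using neg[of x0 t0] x0 by force
    then show ?thesis using x0 by (auto simp: K_def)
  qed
  show ?thesis
  proof (intro bexI ballI)
    fix x t assume xt: "x \<in> S" "t \<in> {0..T}"
    show "z x t \<le> z (fst pm) (snd pm)"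
    proof (cases "\<bar>x\<bar> \<ge> R")
      case True
      then have "z x t < 0" using neg xt by auto
      also have "0 < z x0 t0" by fact
      also have "\<dots> \<le> z (fst pm) (snd pm)" using pm(2)[OF x0K] by simp
      finally show ?thesis by simp
    next
      case False
      then have "(x, t) \<in> K" using xt by (auto simp: K_def)
      then show ?thesis using pm(2) by force
    qed
  qed (use pm(1) in \<open>auto simp: K_def\<close>)
qed

lemma deriv_mult_real:
  fixes f g :: "real \<Rightarrow> real"
  assumes "f differentiable (at x)" "g differentiable (at x)"
  shows "deriv (\<lambda>y. f y * g y) x = deriv f x * g x + f x * deriv g x"
proof -
  have "(f has_real_derivative deriv f x) (at x)" "(g has_real_derivative deriv g x) (at x)"
    using assms DERIV_deriv_iff_real_differentiable by blast+
  from DERIV_mult[OF this] show ?thesis by (intro DERIV_imp_deriv) (simp add: algebra_simps)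
qed

lemma ode_upper:
  fixes w f :: "real \<Rightarrow> real"
  assumes bw: "bounded (range w)"
    and d1: "\<And>x. w differentiable (at x)" and d2: "\<And>x. deriv w differentiable (at x)"
    and eq: "\<And>x. deriv (deriv w) x = lam * w x - mu * f x"
    and fM: "\<And>x. f x \<le> M" and lam: "lam > 0" and mu: "mu > 0"
  shows "w x0 \<le> mu * M / lam"
proof (rule field_le_epsilon)
  fix e :: real assume e: "e > 0"
  define \<eta> where "\<eta> = e * lam / 2"
  have eta: "\<eta> > 0" using e lam by (simp add: \<eta>_def)
  obtain Bw where Bw: "\<And>x. \<bar>w x\<bar> \<le> Bw"
    using bw unfolding bounded_iff by (auto simp: real_norm_def) 
  have Bw0: "Bw \<ge> 0" using Bw[of 0] by simp
  define g where "g x = w x - \<eta> * (x - x0)^2" for x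
  define R where "R = 2 * Bw / \<eta> + 1"
  have R1: "R \<ge> 1" using Bw0 eta by (simp add: R_def)
  have dw: "\<And>x. (w has_real_derivative deriv w x) (at x)"
    using d1 DERIV_deriv_iff_real_differentiable by blast
  have dw2: "\<And>x. (deriv w has_real_derivative deriv (deriv w) x) (at x)"
    using d2 DERIV_deriv_iff_real_differentiable by blast
  have dg: "\<And>x. (g has_real_derivative (deriv w x - 2 * \<eta> * (x - x0))) (at x)"
    unfolding g_def by (auto intro!: derivative_eq_intros dw)
  have dg2: "\<And>x. ((\<lambda>x. deriv w x - 2 * \<eta> * (x - x0)) has_real_derivative (deriv (deriv w) x - 2 * \<eta>)) (at x)"
    by (auto intro!: derivative_eq_intros dw2)
  have cg: "continuous_on (cball x0 R) g"
    using dg by (meson DERIV_isCont continuous_at_imp_continuous_on)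
  have "\<exists>xm\<in>cball x0 R. \<forall>y\<in>cball x0 R. g y \<le> g xm"
    by (rule continuous_attains_sup[OF compact_cball _ cg]) (use R1 in auto)
  then obtain xm where xm: "xm \<in> cball x0 R" "\<And>y. y \<in> cball x0 R \<Longrightarrow> g y \<le> g xm" by blast
  have gx0: "g x0 = w x0" by (simp add: g_def)
  have glob: "g y \<le> g xm" for y
  proof (cases "y \<in> cball x0 R")
    case True then show ?thesis using xm by auto
  next
    case False
    then have "\<bar>y - x0\<bar> > R" by (auto simp: dist_real_def)
    then have "R^2 < \<bar>y - x0\<bar>^2" using R1 by (intro power_strict_mono) auto
    then have "(y - x0)^2 > R^2" by simp
    moreover have "R^2 \<ge> R" using R1 by (simp add: power2_eq_square)
    ultimately have "\<eta> * (y - x0)^2 > \<eta> * R" using eta by (intro mult_strict_left_mono) auto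
    moreover have "\<eta> * R = 2 * Bw + \<eta>" using eta by (simp add: R_def field_simps)
    moreover have "w y \<le> Bw" using Bw[of y] by (simp add: abs_le_iff)
    ultimately have "g y < Bw - 2 * Bw" using eta unfolding g_def by linarith
    also have "\<dots> \<le> w x0" using Bw[of x0] by (simp add: abs_le_iff)
    also have "\<dots> \<le> g xm" using xm(2)[of x0] gx0 R1 by simp
    finally show ?thesis by simp
  qed
  have "(\<lambda>x. deriv w x - 2 * \<eta> * (x - x0)) xm = 0 \<and> deriv (deriv w) xm - 2 * \<eta> \<le> 0"
    by (rule second_deriv_max[of 1 xm g, OF _ dg dg2]) (use glob in auto)
  then have "lam * w xm - mu * f xm \<le> 2 * \<eta>" using eq by simp
  then have "lam * w xm \<le> 2 * \<eta> + mu * M" using fM[of xm] mu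
    by (smt (verit) mult_left_mono)
  moreover have "w x0 \<le> w xm" using glob[of x0] gx0 eta unfolding g_def by (smt (verit) zero_le_power2 mult_nonneg_nonneg)
  ultimately have "lam * w x0 \<le> 2 * \<eta> + mu * M" using lam by (smt (verit) mult_left_mono)
  then have "w x0 \<le> (2 * \<eta> + mu * M) / lam" using lam by (simp add: field_simps)
  also have "\<dots> = mu * M / lam + e" using lam by (simp add: \<eta>_def field_simps)
  finally show "w x0 \<le> mu * M / lam + e" .
qed

lemma ode_deriv_bound:
  fixes w f :: "real \<Rightarrow> real"
  assumes bw: "bounded (range w)"
    and d1: "\<And>x. w differentiable (at x)" and d2: "\<And>x. deriv w differentiable (at x)"
    and eq: "\<And>x. deriv (deriv w) x = lam * w x - mu * f x"
    and fM: "\<And>x. f x \<le> M" and f0: "\<And>x. f x \<ge> 0" and w0: "\<And>x. w x \<ge> 0"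
    and lam: "lam > 0" and mu: "mu > 0"
  shows "\<bar>deriv w x\<bar> \<le> mu * M / lam + mu * M"
proof -
  define A where "A = mu * M / lam"
  have wA: "\<And>y. w y \<le> A" unfolding A_def by (rule ode_upper[OF assms(1-5) lam mu])
  have M0: "M \<ge> 0" using fM[of 0] f0[of 0] by simp
  have w2: "\<bar>deriv (deriv w) y\<bar> \<le> mu * M" for y
  proof -
    have "lam * w y \<le> lam * A" using wA lam by simp
    also have "lam * A = mu * M" using lam by (simp add: A_def)
    finally have "lam * w y \<le> mu * M" .
    moreover have "mu * f y \<le> mu * M" "mu * f y \<ge> 0" "lam * w y \<ge> 0"
      using fM[of y] f0[of y] w0[of y] mu lam by auto
    ultimately show ?thesis using eq[of y] by simp
  qed
  have dw: "\<And>x. (w has_real_derivative deriv w x) (at x)"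
    using d1 DERIV_deriv_iff_real_differentiable by blast
  have dw2: "\<And>x. (deriv w has_real_derivative deriv (deriv w) x) (at x)"
    using d2 DERIV_deriv_iff_real_differentiable by blast
  obtain z where z: "x < z" "z < x + 1" "w (x + 1) - w x = (x + 1 - x) * deriv w z"
    using MVT2[of x "x + 1" w "deriv w"] dw by auto
  obtain r where r: "x < r" "r < z" "deriv w z - deriv w x = (z - x) * deriv (deriv w) r"
    using MVT2[of x z "deriv w" "deriv (deriv w)"] dw2 z(1) by auto
  have "\<bar>(z - x) * deriv (deriv w) r\<bar> \<le> 1 * (mu * M)"
    unfolding abs_mult using z w2[of r] by (intro mult_mono) auto
  moreover have "\<bar>deriv w z\<bar> \<le> A" using z(3) wA[of x] wA[of "x+1"] w0[of x] w0[of "x+1"] by simp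
  ultimately show ?thesis using r(3) unfolding A_def by linarith
qed

lemma comparison:
  fixes w S wx wxx wt Sx Sxx St \<beta> :: "real \<Rightarrow> real \<Rightarrow> real" and D :: "real set"
  assumes D: "closed D"
    and cont: "continuous_on (D \<times> {0..T}) (\<lambda>p. w (fst p) (snd p) - S (fst p) (snd p))"
    and bnd: "\<And>x t. x \<in> D \<Longrightarrow> t \<in> {0..T} \<Longrightarrow> w x t - S x t \<le> Mb"
    and init: "\<And>x. x \<in> D \<Longrightarrow> w x 0 \<le> S x 0"
    and bdry: "\<And>x t. x \<in> D \<Longrightarrow> x \<notin> interior D \<Longrightarrow> t \<in> {0..T} \<Longrightarrow> w x t \<le> S x t"
    and dw: "\<And>x t. x \<in> interior D \<Longrightarrow> t \<in> {0<..T} \<Longrightarrow>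
              ((\<lambda>y. w y t) has_real_derivative wx x t) (at x) \<and>
              ((\<lambda>y. wx y t) has_real_derivative wxx x t) (at x) \<and>
              ((\<lambda>s. w x s) has_real_derivative wt x t) (at t)"
    and dS: "\<And>x t. x \<in> interior D \<Longrightarrow> t \<in> {0<..T} \<Longrightarrow>
              ((\<lambda>y. S y t) has_real_derivative Sx x t) (at x) \<and>
              ((\<lambda>y. Sx y t) has_real_derivative Sxx x t) (at x) \<and>
              ((\<lambda>s. S x s) has_real_derivative St x t) (at t)"
    and drift: "\<And>x t. x \<in> interior D \<Longrightarrow> t \<in> {0<..T} \<Longrightarrow> \<bar>\<beta> x t\<bar> \<le> K"
    and H: "\<And>x t. x \<in> interior D \<Longrightarrow> t \<in> {0<..T} \<Longrightarrow> w x t > S x t \<Longrightarrow>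
              wt x t - St x t \<le> (wxx x t - Sxx x t) - \<beta> x t * (wx x t - Sx x t)"
    and K0: "K \<ge> 0"
  shows "\<And>x t. x \<in> D \<Longrightarrow> t \<in> {0..T} \<Longrightarrow> w x t \<le> S x t"
proof -
  define B where "B = K + 3"
  have key: "w x t - S x t - \<delta> * exp (B * t) * (1 + x^2) \<le> 0"
    if xt: "x \<in> D" "t \<in> {0..T}" and \<delta>: "\<delta> > 0" for x t \<delta>
  proof (rule ccontr)
    define z where "z x t = w x t - S x t - \<delta> * exp (B * t) * (1 + x^2)" for x t
    assume "\<not> w x t - S x t - \<delta> * exp (B * t) * (1 + x^2) \<le> 0"
    then have zpos: "z x t > 0" by (simp add: z_def)
    define R where "R = \<bar>Mb\<bar> / \<delta> + 1"
    have R1: "R \<ge> 1" using \<delta> by (simp add: R_def)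
    have neg: "z y s < 0" if "y \<in> D" "s \<in> {0..T}" "\<bar>y\<bar> \<ge> R" for y s
    proof -
      have "R^2 \<le> \<bar>y\<bar>^2" using that R1 by (intro power_mono) auto
      moreover have "R \<le> R^2" using R1 by (simp add: power2_eq_square)
      ultimately have "R \<le> y^2" by simp
      then have "\<delta> * R \<le> \<delta> * y^2" using \<delta> by simp
      moreover have "\<delta> * R = \<bar>Mb\<bar> + \<delta>" using \<delta> by (simp add: R_def field_simps)
      moreover have "exp (B * s) \<ge> 1" using that(2) by (simp add: B_def K0)
      then have "\<delta> * (1 + y^2) \<le> \<delta> * exp (B * s) * (1 + y^2)"
        using \<delta> by (simp add: mult_right_mono)
      moreover have "w y s - S y s \<le> Mb" using bnd that by auto
      moreover have "\<delta> * (1 + y^2) = \<delta> + \<delta> * y^2" by (simp add: algebra_simps)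
      ultimately show ?thesis using \<delta> abs_ge_self[of Mb] unfolding z_def by linarith
    qed
    have contz: "continuous_on (D \<times> {0..T}) (\<lambda>p. z (fst p) (snd p))"
      unfolding z_def by (intro continuous_intros cont)
    obtain xm tm where m: "xm \<in> D" "tm \<in> {0..T}" "\<And>y s. y \<in> D \<Longrightarrow> s \<in> {0..T} \<Longrightarrow> z y s \<le> z xm tm"
      using max_exists[OF D contz neg xt zpos] by blast
    have zm: "z xm tm > 0" using m(3)[OF xt] zpos by simp
    have tm0: "tm \<noteq> 0"
    proof
      assume "tm = 0"
      then have "z xm tm \<le> - \<delta>" using init[OF m(1)] \<delta>
        by (simp add: z_def algebra_simps) (smt (verit) mult_nonneg_nonneg zero_le_power2)
      with zm \<delta> show False by simp
    qed
    then have tm: "tm \<in> {0<..T}" using m(2) by auto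
    have xmi: "xm \<in> interior D"
    proof (rule ccontr)
      assume "xm \<notin> interior D"
      then have "w xm tm \<le> S xm tm" using bdry m by auto
      then have "z xm tm < 0" using \<delta> by (simp add: z_def) (smt (verit) exp_gt_zero mult_pos_pos zero_le_power2)
      with zm show False by simp
    qed
    then obtain d where d: "d > 0" "ball xm d \<subseteq> D" by (meson mem_interior)
    have ballint: "ball xm d \<subseteq> interior D" using d by (simp add: interior_maximal)
    define E where "E = \<delta> * exp (B * tm)"
    have E: "E > 0" using \<delta> by (simp add: E_def)
    have sp: "(\<lambda>y. wx y tm - Sx y tm - 2 * E * y) xm = 0 \<and> wxx xm tm - Sxx xm tm - 2 * E \<le> 0"
    proof (rule second_deriv_max[of d xm "\<lambda>y. z y tm"])
      show "d > 0" by fact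
      fix y assume y: "\<bar>y - xm\<bar> < d"
      then have "y \<in> interior D" using ballint by (auto simp: dist_real_def)
      from dw[OF this tm] dS[OF this tm]
      show "((\<lambda>y. z y tm) has_real_derivative wx y tm - Sx y tm - 2 * E * y) (at y)"
        unfolding z_def E_def by (auto intro!: derivative_eq_intros)
      show "z y tm \<le> z xm tm" using y d m(2) by (intro m(3)) (auto simp: dist_real_def)
    next
      from dw[OF xmi tm] dS[OF xmi tm]
      show "((\<lambda>y. wx y tm - Sx y tm - 2 * E * y) has_real_derivative wxx xm tm - Sxx xm tm - 2 * E) (at xm)"
        by (auto intro!: derivative_eq_intros)
    qed
    have ti: "wt xm tm - St xm tm - E * B * (1 + xm^2) \<ge> 0"
    proof (rule deriv_left_max[of "\<lambda>s. z xm s" _ tm tm])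
      from dw[OF xmi tm] dS[OF xmi tm]
      show "((\<lambda>s. z xm s) has_real_derivative wt xm tm - St xm tm - E * B * (1 + xm^2)) (at tm)"
        unfolding z_def E_def by (auto intro!: derivative_eq_intros simp: algebra_simps)
      show "tm > 0" using tm by simp
      fix s assume "tm - tm < s" "s < tm"
      then show "z xm s \<le> z xm tm" using tm by (intro m(3) m(1)) auto
    qed
    have wS: "w xm tm > S xm tm" using zm E unfolding z_def
      by (smt (verit) exp_gt_zero mult_pos_pos zero_le_power2 \<delta>)
    have Hm: "wt xm tm - St xm tm \<le> (wxx xm tm - Sxx xm tm) - \<beta> xm tm * (wx xm tm - Sx xm tm)"
      using H[OF xmi tm wS] .
    have e1: "wx xm tm - Sx xm tm = 2 * E * xm" using sp by simp
    have e2: "wxx xm tm - Sxx xm tm \<le> 2 * E" using sp by simp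
    have "- \<beta> xm tm * (wx xm tm - Sx xm tm) \<le> 2 * E * (K * \<bar>xm\<bar>)"
    proof -
      have "\<bar>\<beta> xm tm * (2 * E * xm)\<bar> = 2 * E * (\<bar>\<beta> xm tm\<bar> * \<bar>xm\<bar>)" using E by (simp add: abs_mult)
      also have "\<dots> \<le> 2 * E * (K * \<bar>xm\<bar>)" using drift[OF xmi tm] E by (intro mult_left_mono mult_right_mono) auto
      finally have "\<bar>\<beta> xm tm * (2 * E * xm)\<bar> \<le> 2 * E * (K * \<bar>xm\<bar>)" .
      then have "- (\<beta> xm tm * (2 * E * xm)) \<le> 2 * E * (K * \<bar>xm\<bar>)" by linarith
      then show ?thesis using e1 by simp
    qed
    then have "E * B * (1 + xm^2) \<le> 2 * E + 2 * E * (K * \<bar>xm\<bar>)" using ti Hm e2 by linarith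
    then have "E * (B * (1 + xm^2)) \<le> E * (2 + 2 * (K * \<bar>xm\<bar>))"
      by (simp add: algebra_simps)
    then have b1: "B * (1 + xm^2) \<le> 2 + 2 * (K * \<bar>xm\<bar>)" using mult_le_cancel_left_pos[OF E] by blast
    have "0 \<le> (\<bar>xm\<bar> - 1)^2" by simp
    then have "2 * \<bar>xm\<bar> \<le> 1 + xm^2" by (simp add: power2_diff)
    then have b2: "K * (2 * \<bar>xm\<bar>) \<le> K * (1 + xm^2)" using K0 by (intro mult_left_mono) auto
    have b3: "B * (1 + xm^2) = K * (1 + xm^2) + 3 + 3 * xm^2" by (simp add: B_def algebra_simps)
    have b4: "K * (2 * \<bar>xm\<bar>) = 2 * (K * \<bar>xm\<bar>)" by simp
    show False using b1 b2 b3 b4 zero_le_power2[of xm] by linarith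
  qed
  fix x t assume xt: "x \<in> D" "t \<in> {0..T}"
  define c where "c = exp (B * t) * (1 + x^2)"
  have c: "c > 0" unfolding c_def by (simp add: add_pos_nonneg)
  show "w x t \<le> S x t"
  proof (rule field_le_epsilon)
    fix e :: real assume e: "e > 0"
    have "w x t - S x t - (e / c) * exp (B * t) * (1 + x^2) \<le> 0"
      using key[OF xt, of "e / c"] e c by simp
    moreover have "(e / c) * exp (B * t) * (1 + x^2) = e" using c unfolding c_def by (simp add: field_simps)
    ultimately show "w x t \<le> S x t + e" by linarith
  qed
qed

lemma cont_eval:
  fixes U :: "real \<Rightarrow> (real \<Rightarrow>\<^sub>C real)"
  assumes cU: "continuous_on T U"
  shows "continuous_on (UNIV \<times> T) (\<lambda>p. apply_bcontfun (U (snd p)) (fst p))"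
  unfolding continuous_on_iff
proof (intro ballI allI impI)
  fix p :: "real \<times> real" and e :: real
  assume p: "p \<in> UNIV \<times> T" and e: "e > 0"
  obtain x t where pxt: "p = (x, t)" by (cases p)
  have t: "t \<in> T" using p pxt by auto
  obtain d1 where d1: "d1 > 0" "\<And>t'. t' \<in> T \<Longrightarrow> dist t' t < d1 \<Longrightarrow> dist (U t') (U t) < e / 2"
    using cU t e unfolding continuous_on_iff by (metis half_gt_zero)
  have "isCont (apply_bcontfun (U t)) x"
    by (meson UNIV_I continuous_on_apply_bcontfun continuous_on_eq_continuous_at open_UNIV)
  then obtain d2 where d2: "d2 > 0" "\<And>x'. dist x' x < d2 \<Longrightarrow> dist (U t x') (U t x) < e / 2"
    unfolding continuous_at_eps_delta using e by (metis half_gt_zero)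
  show "\<exists>d>0. \<forall>p'\<in>UNIV \<times> T. dist p' p < d \<longrightarrow>
          dist (apply_bcontfun (U (snd p')) (fst p')) (apply_bcontfun (U (snd p)) (fst p)) < e"
  proof (intro exI[of _ "min d1 d2"] conjI ballI impI)
    show "min d1 d2 > 0" using d1 d2 by simp
    fix p' :: "real \<times> real" assume p': "p' \<in> UNIV \<times> T" "dist p' p < min d1 d2"
    obtain x' t' where pxt': "p' = (x', t')" by (cases p')
    have t': "t' \<in> T" using p' pxt' by auto
    have "dist t' t \<le> dist p' p" using pxt pxt' dist_snd_le[of p' p] by simp
    then have a: "dist (U t') (U t) < e / 2" using d1 t' p' by auto
    have "dist x' x \<le> dist p' p" using pxt pxt' dist_fst_le[of p' p] by simp
    then have b: "dist (U t x') (U t x) < e / 2" using d2 p' by auto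
    have "dist (U t' x') (U t x') \<le> dist (U t') (U t)" by (rule dist_bounded)
    then have "dist (U t' x') (U t x) < e" using a b dist_triangle[of "U t' x'" "U t x" "U t x'"] by linarith
    then show "dist (apply_bcontfun (U (snd p')) (fst p')) (apply_bcontfun (U (snd p)) (fst p)) < e"
      using pxt pxt' by simp
  qed
qed

lemma exp_small:
  fixes c g m :: real
  assumes c: "c > 0" and g: "g > 0" and m: "m > 0"
  shows "eventually (\<lambda>t. g * exp (- c * t) < m) at_top"
proof -
  define N where "N = (ln g - ln m) / c + 1"
  have "g * exp (- c * t) < m" if t: "t \<ge> N" for t
  proof -
    have "c * t \<ge> c * N" using t c by simp
    also have "c * N = ln g - ln m + c" using c by (simp add: N_def field_simps)
    finally have "- c * t < ln m - ln g" using c by simp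
    then have "exp (- c * t) < exp (ln m - ln g)" by simp
    also have "\<dots> = m / g" using m g by (simp add: exp_diff)
    finally show ?thesis using g by (simp add: field_simps)
  qed
  then show ?thesis unfolding eventually_at_top_linorder by blast
qed

lemma u0_deriv_bound:
  fixes f f1 f2 :: "real \<Rightarrow> real"
  assumes X: "X > \<xi>0"
    and d1: "\<And>x. x > \<xi>0 \<Longrightarrow> (f has_real_derivative f1 x) (at x)"
    and d2: "\<And>x. x > \<xi>0 \<Longrightarrow> (f1 has_real_derivative f2 x) (at x)"
    and neg: "\<And>x. x > \<xi>0 \<Longrightarrow> f1 x \<le> 0"
    and pos: "\<And>x. f x > 0"
    and small: "\<And>x. x \<ge> X \<Longrightarrow> \<bar>f2 x\<bar> \<le> \<eta> * f x"
    and h: "h > 0"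
    and x: "x \<ge> X"
  shows "- f1 x \<le> f x * (1 / h + h * \<eta>)"
proof -
  have mono: "f y \<le> f x'" if "\<xi>0 < x'" "x' \<le> y" for x' y
  proof (rule DERIV_nonpos_imp_nonincreasing[of x' y f])
    show "x' \<le> y" by (rule that(2))
    fix z assume "x' \<le> z" "z \<le> y"
    then have "z > \<xi>0" using that by auto
    then show "\<exists>l. (f has_real_derivative l) (at z) \<and> l \<le> 0" using d1 neg by blast
  qed
  obtain s where s: "x < s" "s < x + h" "f (x + h) - f x = (x + h - x) * f1 s"
    using MVT2[of x "x + h" f f1] d1 X x h by force
  obtain r where r: "x < r" "r < s" "f1 s - f1 x = (s - x) * f2 r"
    using MVT2[of x s f1 f2] d2 X x s(1) by force
  have "\<bar>f2 r\<bar> \<le> \<eta> * f r" using small r x by auto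
  moreover have "0 \<le> \<eta> * f X" using small[of X] abs_ge_zero[of "f2 X"] by linarith
  then have "\<eta> \<ge> 0" using pos[of X] by (simp add: zero_le_mult_iff)
  then have "\<eta> * f r \<le> \<eta> * f x" using mono[of x r] X x r by (intro mult_left_mono) auto
  ultimately have "\<bar>f2 r\<bar> \<le> \<eta> * f x" by linarith
  then have "\<bar>(s - x) * f2 r\<bar> \<le> h * (\<eta> * f x)" unfolding abs_mult using s
    by (intro mult_mono) auto
  then have "f1 s \<le> f1 x + h * (\<eta> * f x)" using r(3) by linarith
  then have "h * f1 s \<le> h * f1 x + h * (h * (\<eta> * f x))" using h
    by (metis distrib_left mult_le_cancel_left_pos)
  moreover have "h * f1 s = f (x + h) - f x" using s(3) by simp
  moreover have "f (x + h) > 0" by (rule pos)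
  ultimately have "- (h * f1 x) \<le> f x + h * (h * (\<eta> * f x))" by linarith
  then have "h * (- f1 x) \<le> h * (f x * (1 / h + h * \<eta>))" using h by (simp add: algebra_simps)
  then have "h * (- f1 x) \<le> h * (f x * (1 / h + h * \<eta>))" by simp
  then show ?thesis using h mult_le_cancel_left_pos by blast
qed

theorem lemma3p1:
  fixes chi a b lam mu :: real and u0 :: "real \<Rightarrow> real"
    and u v :: "real \<Rightarrow> real \<Rightarrow> real"
  assumes pos: "chi > 0" "a > 0" "b > 0" "lam > 0" "mu > 0"
    and b_gt: "b > 2 * chi * mu"
    and u0_bdd: "bounded (range u0)"
    and u0_uc: "uniformly_continuous_on UNIV u0"
    and u0_pos: "\<forall>x. u0 x > 0"
    and u0_left: "Liminf at_bot (\<lambda>x. ereal (u0 x)) > 0"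
    and u0_right: "(u0 \<longlongrightarrow> 0) at_top"
    and u0_C2: "\<exists>\<xi>0 u0' u0''.
        (\<forall>x\<ge>\<xi>0. (u0 has_real_derivative u0' x) (at x within {\<xi>0..})
                 \<and> (u0' has_real_derivative u0'' x) (at x within {\<xi>0..})
                 \<and> u0' x \<le> 0)
        \<and> continuous_on {\<xi>0..} u0''
        \<and> ((\<lambda>x. u0'' x / u0 x) \<longlongrightarrow> 0) at_top"
    and sol: "classical_solution chi a b lam mu u0 u v"
    and eps: "\<epsilon> > 0" and gam: "\<gamma>1 > 0"
    and zeta: "\<forall>\<^sub>F t in at_top. u0 (\<zeta> t) = \<gamma>1 * exp (- (a + \<epsilon>) * t)"
  shows "\<forall>\<omega>. 0 < \<omega> \<and> \<omega> < a / b \<longrightarrow>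
           (\<exists>T1\<ge>0. \<forall>t\<ge>T1. {x. u x t = \<omega>} \<subseteq> {..\<zeta> t})"
proof -
  note S = sol[unfolded classical_solution_def]
  obtain U :: "real \<Rightarrow> (real \<Rightarrow>\<^sub>C real)" where UU: "\<forall>t\<ge>0. \<forall>x. u x t = apply_bcontfun (U t) x" "continuous_on {0..} U"
    using S[THEN conjunct1] by blast
  note init0 = S[THEN conjunct2, THEN conjunct1]
  have init: "\<And>x. u x 0 = u0 x" using init0 by blast
  note unn0 = S[THEN conjunct2, THEN conjunct2, THEN conjunct1]
  have unn: "\<And>x t. t \<ge> 0 \<Longrightarrow> u x t \<ge> 0" using unn0 by blast
  note vnn0 = S[THEN conjunct2, THEN conjunct2, THEN conjunct2, THEN conjunct1]
  have vnn: "\<And>x t. t > 0 \<Longrightarrow> v x t \<ge> 0" using vnn0 by blast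
  note vbd0 = S[THEN conjunct2, THEN conjunct2, THEN conjunct2, THEN conjunct2, THEN conjunct1]
  have vbd: "\<And>t. t > 0 \<Longrightarrow> bounded (range (\<lambda>x. v x t))" using vbd0 by blast
  note PD0 = S[THEN conjunct2, THEN conjunct2, THEN conjunct2, THEN conjunct2, THEN conjunct2]
  note PD = PD0[rule_format]
  define RHS where "RHS x t = deriv (deriv (\<lambda>y. u y t)) x
             - chi * deriv (\<lambda>y. u y t * deriv (\<lambda>z. v z t) y) x
             + u x t * (a - b * u x t)" for x t
  define b' where "b' = b - chi * mu"
  have cm: "chi * mu > 0" using pos by simp
  have b': "b' > 0" using b_gt cm unfolding b'_def by linarith
  have uxD: "((\<lambda>y. u y t) has_real_derivative deriv (\<lambda>y. u y t) x) (at x)" if "t > 0" for x t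
    using PD[OF that] DERIV_deriv_iff_real_differentiable by blast
  have uxxD: "(deriv (\<lambda>y. u y t) has_real_derivative deriv (deriv (\<lambda>y. u y t)) x) (at x)" if "t > 0" for x t
    using PD[OF that] DERIV_deriv_iff_real_differentiable by blast
  have utD: "((\<lambda>s. u x s) has_real_derivative RHS x t) (at t)" if "t > 0" for x t
    using PD[OF that] unfolding RHS_def by blast
  have rhs_eq: "RHS x t = deriv (deriv (\<lambda>y. u y t)) x - chi * deriv (\<lambda>z. v z t) x * deriv (\<lambda>y. u y t) x
        - chi * lam * (u x t * v x t) + u x t * (a - b' * u x t)" if t: "t > 0" for x t
  proof -
    have "deriv (\<lambda>y. u y t * deriv (\<lambda>z. v z t) y) x
        = deriv (\<lambda>y. u y t) x * deriv (\<lambda>z. v z t) x + u x t * deriv (deriv (\<lambda>z. v z t)) x"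
      using PD[OF t, of x] by (intro deriv_mult_real) auto
    moreover have "deriv (deriv (\<lambda>z. v z t)) x = lam * v x t - mu * u x t" using PD[OF t, of x] by linarith
    ultimately have P: "deriv (\<lambda>y. u y t * deriv (\<lambda>z. v z t) y) x
        = deriv (\<lambda>y. u y t) x * deriv (\<lambda>z. v z t) x + u x t * (lam * v x t - mu * u x t)" by simp
    show ?thesis unfolding RHS_def b'_def P by (simp add: algebra_simps)
  qed
  have ucont: "continuous_on (UNIV \<times> {0..T}) (\<lambda>p. u (fst p) (snd p))" for T
  proof -
    have "continuous_on (UNIV \<times> {0..T}) (\<lambda>p. apply_bcontfun (U (snd p)) (fst p))"
      by (rule cont_eval, rule continuous_on_subset[OF UU(2)]) auto
    moreover have "\<And>p. p \<in> UNIV \<times> {0..T} \<Longrightarrow> u (fst p) (snd p) = apply_bcontfun (U (snd p)) (fst p)"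
      using UU(1) by auto
    ultimately show ?thesis using continuous_on_cong by (smt (verit))
  qed
  have ubnd: "\<exists>MT. \<forall>x. \<forall>t\<in>{0..T}. u x t \<le> MT" for T
  proof -
    have "compact (U ` {0..T})"
      by (rule compact_continuous_image[OF continuous_on_subset[OF UU(2)]]) auto
    then obtain B where B: "\<And>f. f \<in> U ` {0..T} \<Longrightarrow> norm f \<le> B"
      using compact_imp_bounded bounded_iff by metis
    have "u x t \<le> B" if "t \<in> {0..T}" for x t
    proof -
      have "u x t = apply_bcontfun (U t) x" using UU(1) that by auto
      also have "\<dots> \<le> norm (apply_bcontfun (U t) x)" by simp
      also have "\<dots> \<le> norm (U t)" by (rule norm_bounded)
      also have "\<dots> \<le> B" using B that by auto
      finally show ?thesis .
    qed
    then show ?thesis by blast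
  qed
  have vxb: "\<bar>deriv (\<lambda>y. v y t) x\<bar> \<le> mu * M / lam + mu * M"
    if t: "t > 0" and M: "\<And>y. u y t \<le> M" for t M x
  proof (rule ode_deriv_bound[where f="\<lambda>y. u y t"])
    show "bounded (range (\<lambda>y. v y t))" using vbd t by auto
    show "\<And>x. (\<lambda>y. v y t) differentiable at x" using PD[OF t] by blast
    show "\<And>x. deriv (\<lambda>y. v y t) differentiable at x" using PD[OF t] by blast
    show "deriv (deriv (\<lambda>y. v y t)) x = lam * v x t - mu * u x t" for x
    proof -
      have "0 = deriv (deriv (\<lambda>y. v y t)) x - lam * v x t + mu * u x t" using PD[OF t, of x] by blast
      then show ?thesis by linarith
    qed
    show "\<And>x. u x t \<le> M" by (rule M)
    show "\<And>x. u x t \<ge> 0" using unn t by auto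
    show "\<And>x. v x t \<ge> 0" using vnn t by auto
  qed (use pos in auto)
  obtain Bu0 where Bu0: "\<And>x. \<bar>u0 x\<bar> \<le> Bu0"
    using u0_bdd unfolding bounded_iff by (auto simp: real_norm_def)
  define M0 where "M0 = max Bu0 (a / b')"
  have M0a: "M0 \<ge> a / b'" and M0u0: "\<And>x. u0 x \<le> M0"
    unfolding M0_def using Bu0 by (auto simp: abs_le_iff intro: max.coboundedI1)
  have M0pos: "M0 > 0" using M0a pos b' by (smt (verit) divide_pos_pos)
  have glob: "u x T0 \<le> M0" if T0: "T0 \<ge> 0" for x T0
  proof -
    obtain MT where MT: "\<And>x t. t \<in> {0..T0} \<Longrightarrow> u x t \<le> MT" using ubnd[of T0] by blast
    have MT0: "MT \<ge> 0" using MT[of 0 x] unn[of 0 x] T0 by auto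
    define K where "K = chi * (mu * MT / lam + mu * MT)"
    have K0: "K \<ge> 0" unfolding K_def using pos MT0 by simp
    have c1: "continuous_on (UNIV \<times> {0..T0}) (\<lambda>p. u (fst p) (snd p) - M0)"
      by (intro continuous_intros ucont)
    have c2: "\<And>x t. x \<in> UNIV \<Longrightarrow> t \<in> {0..T0} \<Longrightarrow> u x t - M0 \<le> MT - M0" using MT by auto
    have c3: "\<And>x. x \<in> UNIV \<Longrightarrow> u x 0 \<le> M0" using init M0u0 by simp
    have c4: "\<And>x t. x \<in> UNIV \<Longrightarrow> x \<notin> interior UNIV \<Longrightarrow> t \<in> {0..T0} \<Longrightarrow> u x t \<le> M0" by simp
    have c5: "\<And>x t. x \<in> interior UNIV \<Longrightarrow> t \<in> {0<..T0} \<Longrightarrow>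
              ((\<lambda>y. u y t) has_real_derivative deriv (\<lambda>y. u y t) x) (at x) \<and>
              ((\<lambda>y. deriv (\<lambda>y. u y t) y) has_real_derivative deriv (deriv (\<lambda>y. u y t)) x) (at x) \<and>
              ((\<lambda>s. u x s) has_real_derivative RHS x t) (at t)"
      using uxD uxxD utD by auto
    have c6: "\<And>x t. x \<in> interior UNIV \<Longrightarrow> t \<in> {0<..T0} \<Longrightarrow>
              ((\<lambda>y. M0) has_real_derivative 0) (at x) \<and>
              ((\<lambda>y. 0) has_real_derivative 0) (at x) \<and>
              ((\<lambda>s. M0) has_real_derivative 0) (at t)"
      by auto
    have c7: "\<And>x t. x \<in> interior UNIV \<Longrightarrow> t \<in> {0<..T0} \<Longrightarrow> \<bar>chi * deriv (\<lambda>y. v y t) x\<bar> \<le> K"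
    proof -
      fix x t :: real assume "x \<in> interior UNIV" "t \<in> {0<..T0}"
      then have t: "t > 0" "t \<le> T0" by auto
      have "\<bar>deriv (\<lambda>y. v y t) x\<bar> \<le> mu * MT / lam + mu * MT"
        by (rule vxb[OF t(1)]) (use MT t in auto)
      then show "\<bar>chi * deriv (\<lambda>y. v y t) x\<bar> \<le> K" unfolding K_def abs_mult using pos
        by (simp add: mult_left_mono)
    qed
    have c8: "\<And>x t. x \<in> interior UNIV \<Longrightarrow> t \<in> {0<..T0} \<Longrightarrow> u x t > M0 \<Longrightarrow>
              RHS x t - 0 \<le> (deriv (deriv (\<lambda>y. u y t)) x - 0) - chi * deriv (\<lambda>y. v y t) x * (deriv (\<lambda>y. u y t) x - 0)"
    proof -
      fix x t :: real assume "x \<in> interior UNIV" "t \<in> {0<..T0}" and ut: "u x t > M0"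
      then have t: "t > 0" by auto
      have "u x t * v x t \<ge> 0" using unn[of t x] vnn[OF t, of x] t by simp
      then have A: "chi * lam * (u x t * v x t) \<ge> 0" using pos by simp
      have "b' * u x t \<ge> b' * M0" using ut b' by simp
      moreover have "b' * M0 \<ge> a" using M0a b' by (simp add: field_simps)
      ultimately have "a - b' * u x t \<le> 0" by linarith
      then have B: "u x t * (a - b' * u x t) \<le> 0" using ut M0pos by (simp add: mult_nonneg_nonpos)
      show "RHS x t - 0 \<le> (deriv (deriv (\<lambda>y. u y t)) x - 0) - chi * deriv (\<lambda>y. v y t) x * (deriv (\<lambda>y. u y t) x - 0)"
        using rhs_eq[OF t, of x] A B by simp
    qed
    have "\<And>x t. x \<in> UNIV \<Longrightarrow> t \<in> {0..T0} \<Longrightarrow> u x t \<le> M0"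
      by (rule comparison[where D=UNIV and T=T0 and w="\<lambda>x t. u x t" and S="\<lambda>x t. M0" and Mb="MT - M0"
            and wx="\<lambda>x t. deriv (\<lambda>y. u y t) x" and wxx="\<lambda>x t. deriv (deriv (\<lambda>y. u y t)) x"
            and wt="RHS" and Sx="\<lambda>x t. 0" and Sxx="\<lambda>x t. 0" and St="\<lambda>x t. 0"
            and \<beta>="\<lambda>x t. chi * deriv (\<lambda>y. v y t) x" and K=K,
            OF closed_UNIV c1 c2 c3 c4 c5 c6 c7 c8 K0])
    then show ?thesis using T0 by simp
  qed
  define K1 where "K1 = chi * (mu * M0 / lam + mu * M0)"
  have K10: "K1 \<ge> 0" unfolding K1_def using pos M0pos by simp
  have drift: "\<bar>chi * deriv (\<lambda>y. v y t) x\<bar> \<le> K1" if t: "t > 0" for t x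
  proof -
    have "\<bar>deriv (\<lambda>y. v y t) x\<bar> \<le> mu * M0 / lam + mu * M0"
      by (rule vxb[OF t]) (use glob t in auto)
    then show ?thesis unfolding K1_def abs_mult using pos by (simp add: mult_left_mono)
  qed
  obtain \<xi>0 f1 f2 where u0d: "\<forall>x\<ge>\<xi>0. (u0 has_real_derivative f1 x) (at x within {\<xi>0..})
                 \<and> (f1 has_real_derivative f2 x) (at x within {\<xi>0..}) \<and> f1 x \<le> 0"
     and u0lim: "((\<lambda>x. f2 x / u0 x) \<longlongrightarrow> 0) at_top"
    using u0_C2 by blast
  have d1: "(u0 has_real_derivative f1 x) (at x)" and d2: "(f1 has_real_derivative f2 x) (at x)"
    and f1neg: "f1 x \<le> 0" if x: "x > \<xi>0" for x
  proof -
    have e: "at x within {\<xi>0..} = at x" using x by (intro at_within_interior) auto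
    have sp: "(u0 has_real_derivative f1 x) (at x within {\<xi>0..})
                 \<and> (f1 has_real_derivative f2 x) (at x within {\<xi>0..}) \<and> f1 x \<le> 0"
      using u0d x by simp
    then show "(u0 has_real_derivative f1 x) (at x)" "(f1 has_real_derivative f2 x) (at x)" "f1 x \<le> 0"
      unfolding e by auto
  qed
  define \<epsilon>' where "\<epsilon>' = \<epsilon> / 2"
  have e': "\<epsilon>' > 0" using eps by (simp add: \<epsilon>'_def)
  define h where "h = 2 * K1 / \<epsilon>' + 1"
  have "2 * K1 / \<epsilon>' \<ge> 0" using K10 e' by simp
  then have h: "h > 0" "h \<ge> 1" unfolding h_def by linarith+
  define \<eta> where "\<eta> = \<epsilon>' / (2 * (1 + K1 * h))"
  have eta: "\<eta> > 0" using e' K10 h by (simp add: \<eta>_def add_pos_nonneg)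
  have "\<forall>\<^sub>F x in at_top. dist (f2 x / u0 x) 0 < \<eta>"
    using u0lim eta unfolding tendsto_iff by blast
  then obtain X1 where X1: "\<And>x. x \<ge> X1 \<Longrightarrow> \<bar>f2 x / u0 x\<bar> < \<eta>"
    unfolding eventually_at_top_linorder by (auto simp: dist_real_def)
  define X where "X = max X1 (\<xi>0 + 1)"
  have X: "X > \<xi>0" by (simp add: X_def)
  have small: "\<bar>f2 x\<bar> \<le> \<eta> * u0 x" if "x \<ge> X" for x
  proof -
    have "\<bar>f2 x / u0 x\<bar> < \<eta>" using X1 that by (simp add: X_def)
    moreover have "\<bar>f2 x / u0 x\<bar> = \<bar>f2 x\<bar> / u0 x" using u0_pos[rule_format, of x] by (simp add: abs_div)
    ultimately show ?thesis using u0_pos by (simp add: divide_less_eq less_imp_le)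
  qed
  have mono: "u0 y \<le> u0 x'" if "\<xi>0 < x'" "x' \<le> y" for x' y
  proof (rule DERIV_nonpos_imp_nonincreasing[of x' y u0])
    show "x' \<le> y" by (rule that(2))
    fix z assume "x' \<le> z" "z \<le> y"
    then have "z > \<xi>0" using that by auto
    then show "\<exists>l. (u0 has_real_derivative l) (at z) \<and> l \<le> 0" using d1 f1neg by blast
  qed
  have sup_ineq: "f2 x - \<beta> * f1 x \<le> \<epsilon>' * u0 x" if x: "x \<ge> X" and \<beta>: "\<bar>\<beta>\<bar> \<le> K1" for x \<beta>
  proof -
    have nf1: "- f1 x \<le> u0 x * (1 / h + h * \<eta>)"
      using u0_deriv_bound[of \<xi>0 X u0 f1 f2 \<eta> h x] X d1 d2 f1neg u0_pos small h x by blast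
    have f1n: "f1 x \<le> 0" using f1neg X x by auto
    have "\<beta> * (- f1 x) \<le> \<bar>\<beta>\<bar> * (- f1 x)" using f1n by (intro mult_right_mono) auto
    then have "- \<beta> * f1 x \<le> \<bar>\<beta>\<bar> * (- f1 x)" by simp
    also have "\<dots> \<le> K1 * (- f1 x)" using \<beta> f1n by (intro mult_right_mono) auto
    also have "\<dots> \<le> K1 * (u0 x * (1 / h + h * \<eta>))" using nf1 K10 by (intro mult_left_mono) auto
    finally have A: "- \<beta> * f1 x \<le> u0 x * (K1 / h + K1 * h * \<eta>)" by (simp add: algebra_simps)
    have B: "f2 x \<le> u0 x * \<eta>" using small[OF x] by (simp add: abs_le_iff mult.commute)
    have "K1 \<le> h * (\<epsilon>' / 2)" using e' unfolding h_def by (simp add: field_simps)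
    then have C: "K1 / h \<le> \<epsilon>' / 2" using h by (simp add: field_simps)
    have p1: "1 + K1 * h > 0" using K10 h by (simp add: add_pos_nonneg)
    have gen: "\<And>q e::real. q > 0 \<Longrightarrow> e / (2 * q) * q = e / 2" by (simp add: field_simps)
    have "\<eta> * (1 + K1 * h) = \<epsilon>' / 2" unfolding \<eta>_def by (rule gen[OF p1])
    moreover have "\<eta> + K1 * h * \<eta> = \<eta> * (1 + K1 * h)" by (simp add: algebra_simps)
    ultimately have D: "\<eta> + K1 * h * \<eta> = \<epsilon>' / 2" by simp
    have "K1 / h + K1 * h * \<eta> + \<eta> \<le> \<epsilon>'" using C D by linarith
    then have "u0 x * (K1 / h + K1 * h * \<eta> + \<eta>) \<le> u0 x * \<epsilon>'"
      using u0_pos by (intro mult_left_mono) (auto simp: less_imp_le)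
    then show ?thesis using A B by (simp add: algebra_simps)
  qed
  define C where "C = max 1 (M0 / u0 X)"
  have u0X: "u0 X > 0" using u0_pos by blast
  have C1: "C \<ge> 1" unfolding C_def by simp
  have "C \<ge> M0 / u0 X" unfolding C_def by simp
  then have CX: "C * u0 X \<ge> M0" using u0X by (simp add: divide_le_eq)
  have u0c: "continuous_on {X..} u0"
  proof (intro continuous_at_imp_continuous_on ballI)
    fix x assume "x \<in> {X..}"
    then have "x > \<xi>0" using X by auto
    then show "isCont u0 x" using d1 DERIV_isCont by blast
  qed
  have mainb: "exp (- a * t) * u x t \<le> C * exp (\<epsilon>' * t) * u0 x" if T0: "T0 \<ge> 0" and xt: "x \<ge> X" "t \<in> {0..T0}" for x t T0
  proof -
    have cu: "continuous_on ({X..} \<times> {0..T0}) (\<lambda>p. u (fst p) (snd p))"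
      by (rule continuous_on_subset[OF ucont]) auto
    have cu0: "continuous_on ({X..} \<times> {0..T0}) (\<lambda>p. u0 (fst p))"
      by (rule continuous_on_compose2[OF u0c continuous_on_fst[OF continuous_on_id]]) auto
    have c1: "continuous_on ({X..} \<times> {0..T0}) (\<lambda>p. exp (- a * snd p) * u (fst p) (snd p) - C * exp (\<epsilon>' * snd p) * u0 (fst p))"
      by (intro continuous_intros cu cu0)
    have c2: "exp (- a * t) * u x t - C * exp (\<epsilon>' * t) * u0 x \<le> M0" if "x \<in> {X..}" "t \<in> {0..T0}" for x t
    proof -
      have t0: "t \<ge> 0" using that by auto
      have "exp (- a * t) \<le> 1" using t0 pos by simp
      then have "exp (- a * t) * u x t \<le> 1 * u x t" using unn[OF t0] by (intro mult_right_mono) auto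
      moreover have "u x t \<le> M0" using glob[OF t0] .
      moreover have "C * exp (\<epsilon>' * t) * u0 x \<ge> 0" using C1 u0_pos by (simp add: less_imp_le)
      ultimately show ?thesis by linarith
    qed
    have c3: "exp (- a * 0) * u x 0 \<le> C * exp (\<epsilon>' * 0) * u0 x" if "x \<in> {X..}" for x
    proof -
      have "1 * u0 x \<le> C * u0 x" using C1 u0_pos by (intro mult_right_mono) (auto simp: less_imp_le)
      then show ?thesis using init by simp
    qed
    have c4: "exp (- a * t) * u x t \<le> C * exp (\<epsilon>' * t) * u0 x"
      if "x \<in> {X..}" "x \<notin> interior {X..}" "t \<in> {0..T0}" for x t
    proof -
      have xX: "x = X" using that by auto
      have t0: "t \<ge> 0" using that by auto
      have "exp (- a * t) \<le> 1" using t0 pos by simp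
      then have "exp (- a * t) * u x t \<le> 1 * u x t" using unn[OF t0] by (intro mult_right_mono) auto
      also have "\<dots> \<le> M0" using glob[OF t0] by simp
      also have "\<dots> \<le> C * u0 X" by (rule CX)
      also have "\<dots> = 1 * (C * u0 X)" by simp
      also have "\<dots> \<le> exp (\<epsilon>' * t) * (C * u0 X)" using t0 e' C1 u0X by (intro mult_right_mono) auto
      finally show ?thesis using xX by (simp add: algebra_simps)
    qed
    have c5: "((\<lambda>y. exp (- a * t) * u y t) has_real_derivative exp (- a * t) * deriv (\<lambda>y. u y t) x) (at x) \<and>
              ((\<lambda>y. exp (- a * t) * deriv (\<lambda>y. u y t) y) has_real_derivative exp (- a * t) * deriv (deriv (\<lambda>y. u y t)) x) (at x) \<and>
              ((\<lambda>s. exp (- a * s) * u x s) has_real_derivative (exp (- a * t) * RHS x t - a * exp (- a * t) * u x t)) (at t)"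
      if "x \<in> interior {X..}" "t \<in> {0<..T0}" for x t
    proof -
      have t: "t > 0" using that by auto
      note A = uxD[OF t, of x] uxxD[OF t, of x] utD[OF t, of x]
      show ?thesis
      proof (intro conjI)
        show "((\<lambda>y. exp (- a * t) * u y t) has_real_derivative exp (- a * t) * deriv (\<lambda>y. u y t) x) (at x)"
          by (rule DERIV_cmult[OF A(1)])
        show "((\<lambda>y. exp (- a * t) * deriv (\<lambda>y. u y t) y) has_real_derivative exp (- a * t) * deriv (deriv (\<lambda>y. u y t)) x) (at x)"
          by (rule DERIV_cmult[OF A(2)])
        show "((\<lambda>s. exp (- a * s) * u x s) has_real_derivative (exp (- a * t) * RHS x t - a * exp (- a * t) * u x t)) (at t)"
          using A(3) by (auto intro!: derivative_eq_intros simp: algebra_simps)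
      qed
    qed
    have c6: "((\<lambda>y. C * exp (\<epsilon>' * t) * u0 y) has_real_derivative C * exp (\<epsilon>' * t) * f1 x) (at x) \<and>
              ((\<lambda>y. C * exp (\<epsilon>' * t) * f1 y) has_real_derivative C * exp (\<epsilon>' * t) * f2 x) (at x) \<and>
              ((\<lambda>s. C * exp (\<epsilon>' * s) * u0 x) has_real_derivative C * (\<epsilon>' * exp (\<epsilon>' * t)) * u0 x) (at t)"
      if "x \<in> interior {X..}" "t \<in> {0<..T0}" for x t
    proof -
      have x: "x > \<xi>0" using that X by auto
      show ?thesis
      proof (intro conjI)
        show "((\<lambda>y. C * exp (\<epsilon>' * t) * u0 y) has_real_derivative C * exp (\<epsilon>' * t) * f1 x) (at x)"
          by (rule DERIV_cmult[OF d1[OF x]])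
        show "((\<lambda>y. C * exp (\<epsilon>' * t) * f1 y) has_real_derivative C * exp (\<epsilon>' * t) * f2 x) (at x)"
          by (rule DERIV_cmult[OF d2[OF x]])
        show "((\<lambda>s. C * exp (\<epsilon>' * s) * u0 x) has_real_derivative C * (\<epsilon>' * exp (\<epsilon>' * t)) * u0 x) (at t)"
          by (auto intro!: derivative_eq_intros simp: algebra_simps)
      qed
    qed
    have c7: "\<bar>chi * deriv (\<lambda>y. v y t) x\<bar> \<le> K1" if "x \<in> interior {X..}" "t \<in> {0<..T0}" for x t
      using drift that by auto
    have c8: "(exp (- a * t) * RHS x t - a * exp (- a * t) * u x t) - C * (\<epsilon>' * exp (\<epsilon>' * t)) * u0 x
        \<le> (exp (- a * t) * deriv (deriv (\<lambda>y. u y t)) x - C * exp (\<epsilon>' * t) * f2 x)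
           - chi * deriv (\<lambda>y. v y t) x * (exp (- a * t) * deriv (\<lambda>y. u y t) x - C * exp (\<epsilon>' * t) * f1 x)"
      if "x \<in> interior {X..}" "t \<in> {0<..T0}" "exp (- a * t) * u x t > C * exp (\<epsilon>' * t) * u0 x" for x t
    proof -
      have t: "t > 0" and xX: "x \<ge> X" using that by auto
      define \<beta> where "\<beta> = chi * deriv (\<lambda>y. v y t) x"
      define E where "E = exp (- a * t)"
      define F where "F = C * exp (\<epsilon>' * t)"
      have E: "E > 0" unfolding E_def by simp
      have F: "F > 0" unfolding F_def using C1 by simp
      have "u x t * v x t \<ge> 0" using unn[of t x] vnn[OF t, of x] t by simp
      then have A: "chi * lam * (u x t * v x t) \<ge> 0" using pos by simp
      have B: "u x t * (a - b' * u x t) \<le> a * u x t"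
        using b' by (simp add: algebra_simps)
      have R: "RHS x t \<le> deriv (deriv (\<lambda>y. u y t)) x - \<beta> * deriv (\<lambda>y. u y t) x + a * u x t"
        using rhs_eq[OF t, of x] A B unfolding \<beta>_def by simp
      have Q1: "E * RHS x t - a * E * u x t - (E * deriv (deriv (\<lambda>y. u y t)) x - \<beta> * (E * deriv (\<lambda>y. u y t) x)) \<le> 0"
      proof -
        have "E * RHS x t \<le> E * (deriv (deriv (\<lambda>y. u y t)) x - \<beta> * deriv (\<lambda>y. u y t) x + a * u x t)"
          using R E by (intro mult_left_mono) auto
        then show ?thesis by (simp add: algebra_simps)
      qed
      have "f2 x - \<beta> * f1 x \<le> \<epsilon>' * u0 x" using sup_ineq[OF xX] c7[OF that(1,2)] unfolding \<beta>_def by blast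
      then have "F * (f2 x - \<beta> * f1 x) \<le> F * (\<epsilon>' * u0 x)" using F by (intro mult_left_mono) auto
      then have Q2: "F * f2 x - \<beta> * (F * f1 x) - F * (\<epsilon>' * u0 x) \<le> 0" by (simp add: algebra_simps)
      have "((E * RHS x t - a * E * u x t) - C * (\<epsilon>' * exp (\<epsilon>' * t)) * u0 x)
          - ((E * deriv (deriv (\<lambda>y. u y t)) x - F * f2 x) - \<beta> * (E * deriv (\<lambda>y. u y t) x - F * f1 x))
          = (E * RHS x t - a * E * u x t - (E * deriv (deriv (\<lambda>y. u y t)) x - \<beta> * (E * deriv (\<lambda>y. u y t) x)))
            + (F * f2 x - \<beta> * (F * f1 x) - F * (\<epsilon>' * u0 x))"
        unfolding F_def by (simp add: algebra_simps)
      then have "((E * RHS x t - a * E * u x t) - C * (\<epsilon>' * exp (\<epsilon>' * t)) * u0 x)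
          \<le> ((E * deriv (deriv (\<lambda>y. u y t)) x - F * f2 x) - \<beta> * (E * deriv (\<lambda>y. u y t) x - F * f1 x))"
        using Q1 Q2 by linarith
      then show ?thesis unfolding E_def F_def \<beta>_def by simp
    qed
    have "\<And>x t. x \<in> {X..} \<Longrightarrow> t \<in> {0..T0} \<Longrightarrow> exp (- a * t) * u x t \<le> C * exp (\<epsilon>' * t) * u0 x"
      by (rule comparison[where D="{X..}" and T=T0 and w="\<lambda>x t. exp (- a * t) * u x t"
            and S="\<lambda>x t. C * exp (\<epsilon>' * t) * u0 x" and Mb=M0
            and wx="\<lambda>x t. exp (- a * t) * deriv (\<lambda>y. u y t) x"
            and wxx="\<lambda>x t. exp (- a * t) * deriv (deriv (\<lambda>y. u y t)) x"
            and wt="\<lambda>x t. exp (- a * t) * RHS x t - a * exp (- a * t) * u x t"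
            and Sx="\<lambda>x t. C * exp (\<epsilon>' * t) * f1 x" and Sxx="\<lambda>x t. C * exp (\<epsilon>' * t) * f2 x"
            and St="\<lambda>x t. C * (\<epsilon>' * exp (\<epsilon>' * t)) * u0 x"
            and \<beta>="\<lambda>x t. chi * deriv (\<lambda>y. v y t) x" and K=K1,
            OF closed_atLeast c1 c2 c3 c4 c5 c6 c7 c8 K10])
    then show ?thesis using xt by simp
  qed
  have ubound: "u x t \<le> C * exp ((a + \<epsilon>') * t) * u0 x" if "t \<ge> 0" "x \<ge> X" for x t
  proof -
    have "exp (- a * t) * u x t \<le> C * exp (\<epsilon>' * t) * u0 x" using mainb[of t x t] that by simp
    then have "exp (a * t) * (exp (- a * t) * u x t) \<le> exp (a * t) * (C * exp (\<epsilon>' * t) * u0 x)"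
      by (intro mult_left_mono) auto
    moreover have L: "exp (a * t) * (exp (- a * t) * u x t) = u x t"
    proof -
      have "exp (a * t) * (exp (- a * t) * u x t) = (exp (a * t) * exp (- a * t)) * u x t"
        by (simp only: mult.assoc)
      also have "exp (a * t) * exp (- a * t) = 1" by (simp add: mult_exp_exp)
      finally show ?thesis by simp
    qed
    moreover have R: "exp (a * t) * (C * exp (\<epsilon>' * t) * u0 x) = C * exp ((a + \<epsilon>') * t) * u0 x"
    proof -
      have "exp (a * t) * (C * exp (\<epsilon>' * t) * u0 x) = C * (exp (a * t) * exp (\<epsilon>' * t)) * u0 x"
        by (simp add: algebra_simps)
      also have "exp (a * t) * exp (\<epsilon>' * t) = exp ((a + \<epsilon>') * t)" by (simp add: distrib_right exp_add)
      finally show ?thesis .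
    qed
    ultimately show ?thesis by (simp only: L R)
  qed
  obtain c where c: "0 < ereal c" "ereal c < Liminf at_bot (\<lambda>x. ereal (u0 x))"
    using ereal_dense2[OF u0_left] by blast
  have c0: "c > 0" using c(1) by simp
  have "\<forall>\<^sub>F x in at_bot. ereal c < ereal (u0 x)" by (rule less_LiminfD[OF c(2)])
  then obtain N where N: "\<And>x. x \<le> N \<Longrightarrow> c < u0 x"
    unfolding eventually_at_bot_linorder by auto
  define N' where "N' = min N X"
  have u0cont: "continuous_on {N'..X} u0"
    using uniformly_continuous_imp_continuous[OF u0_uc] continuous_on_subset by blast
  obtain xm where xm: "xm \<in> {N'..X}" "\<And>y. y \<in> {N'..X} \<Longrightarrow> u0 xm \<le> u0 y"
    using continuous_attains_inf[OF compact_Icc _ u0cont] unfolding N'_def by fastforce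
  define m where "m = min c (u0 xm)"
  have m0: "m > 0" unfolding m_def using c0 u0_pos by simp
  have lowm: "u0 x \<ge> m" if "x \<le> X" for x
  proof (cases "x \<le> N")
    case True then show ?thesis using N[of x] by (simp add: m_def)
  next
    case False then have "x \<in> {N'..X}" using that by (simp add: N'_def)
    then have "u0 xm \<le> u0 x" using xm(2) by blast
    then show ?thesis by (simp add: m_def)
  qed
  show ?thesis
  proof (intro allI impI)
    fix \<omega> :: real assume \<omega>: "0 < \<omega> \<and> \<omega> < a / b"
    have Cg: "C * \<gamma>1 > 0" using C1 gam by simp
    have "\<forall>\<^sub>F t in at_top. u0 (\<zeta> t) = \<gamma>1 * exp (- (a + \<epsilon>) * t) \<and> \<gamma>1 * exp (- (a + \<epsilon>) * t) < m
            \<and> (C * \<gamma>1) * exp (- (\<epsilon> / 2) * t) < \<omega>"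
      using zeta exp_small[of "a + \<epsilon>" \<gamma>1 m] exp_small[of "\<epsilon> / 2" "C * \<gamma>1" \<omega>] pos eps gam m0 Cg \<omega>
      by (auto intro: eventually_conj)
    then obtain N1 where N1: "\<And>t. t \<ge> N1 \<Longrightarrow> u0 (\<zeta> t) = \<gamma>1 * exp (- (a + \<epsilon>) * t) \<and> \<gamma>1 * exp (- (a + \<epsilon>) * t) < m
            \<and> (C * \<gamma>1) * exp (- (\<epsilon> / 2) * t) < \<omega>"
      unfolding eventually_at_top_linorder by blast
    show "\<exists>T1\<ge>0. \<forall>t\<ge>T1. {x. u x t = \<omega>} \<subseteq> {..\<zeta> t}"
    proof (intro exI[of _ "max N1 1"] conjI allI impI subsetI)
      show "max N1 1 \<ge> 0" by simp
      fix t x assume t: "max N1 1 \<le> t" and x: "x \<in> {x. u x t = \<omega>}"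
      have tN: "t \<ge> N1" and t0: "t \<ge> 0" using t by auto
      note P = N1[OF tN]
      show "x \<in> {..\<zeta> t}"
      proof (rule ccontr)
        assume "x \<notin> {..\<zeta> t}"
        then have xz: "x > \<zeta> t" by simp
        have zX: "\<zeta> t > X"
        proof (rule ccontr)
          assume "\<not> \<zeta> t > X"
          then have "u0 (\<zeta> t) \<ge> m" using lowm by simp
          with P show False by simp
        qed
        have "u0 x \<le> u0 (\<zeta> t)" using mono[of "\<zeta> t" x] zX X xz by simp
        then have "u0 x \<le> \<gamma>1 * exp (- (a + \<epsilon>) * t)" using P by simp
        then have "C * exp ((a + \<epsilon>') * t) * u0 x \<le> C * exp ((a + \<epsilon>') * t) * (\<gamma>1 * exp (- (a + \<epsilon>) * t))"
          using C1 by (intro mult_left_mono) auto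
        also have "\<dots> = (C * \<gamma>1) * (exp ((a + \<epsilon>') * t) * exp (- (a + \<epsilon>) * t))" by (simp add: algebra_simps)
        also have "exp ((a + \<epsilon>') * t) * exp (- (a + \<epsilon>) * t) = exp (- (\<epsilon> / 2) * t)"
        proof -
          have "(a + \<epsilon>') * t + - (a + \<epsilon>) * t = - (\<epsilon> / 2) * t" by (simp add: \<epsilon>'_def algebra_simps)
          then show ?thesis by (simp only: mult_exp_exp)
        qed
        finally have "C * exp ((a + \<epsilon>') * t) * u0 x < \<omega>" using P by simp
        moreover have "u x t \<le> C * exp ((a + \<epsilon>') * t) * u0 x" using ubound[OF t0] zX xz by simp
        ultimately have "u x t < \<omega>" by simp
        with x show False by simp
      qed
    qed
  qed
qed

end
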